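(* Let $g:\mathbb{R}\to\mathbb{R}$ be periodic with period $T$, i.e. $g(x+T)=g(x)$ for all $x$, and assume there exist $x_1,x_2\in\mathbb{R}$ with $0<x_2-x_1<T$ such that $g$ is continuous on $[x_1,x_2]$; set $M_1=\min_{x\in[x_1,x_2]}g(x)$ and $M_2=\max_{x\in[x_1,x_2]}g(x)$. Let $K\in\mathbb{N}^+$, let $\alpha\in\mathbb{R}$ be transcendental, and let $r_1,\dots,r_K\in\mathbb{Q}$ be pairwise distinct. Then (1) the set $\{[g(\tfrac{w}{\alpha+r_1}),\dots,g(\tfrac{w}{\alpha+r_K})]^T: w\in\mathbb{R}\}$ is dense in $[M_1,M_2]^K$ (i.e., every point of $[M_1,M_2]^K$ is a limit of points of this set); and (2) if $M_1<M_2$, then the set $\{[u\,g(\tfrac{w}{\alpha+r_1})+v,\dots,u\,g(\tfrac{w}{\alpha+r_K})+v]^T: u,v,w\in\mathbb{R}\}$ is dense in $\mathbb{R}^K$.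
   Context: A real number is transcendental if it is not a root of any nonzero polynomial with rational coefficients. *)

theory Defs
  imports "HOL-Analysis.Analysis" "HOL-Computational_Algebra.Polynomial"
begin

definition transcendental_real :: "real \<Rightarrow> bool" where
  "transcendental_real x \<longleftrightarrow>
     \<not> (\<exists>p :: real poly. p \<noteq> 0 \<and> (\<forall>i. coeff p i \<in> \<rat>) \<and> poly p x = 0)"

end

theory Submission
  imports Defs "HOL-Analysis.Kronecker_Approximation_Theorem"
begin


definition ratpoly :: "real poly \<Rightarrow> bool" where
  "ratpoly p \<longleftrightarrow> (\<forall>i. coeff p i \<in> \<rat>)"

lemma ratpoly_mult: "ratpoly p \<Longrightarrow> ratpoly q \<Longrightarrow> ratpoly (p * q)"
  unfolding ratpoly_def coeff_mult by (auto intro!: Rats_sum Rats_mult)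

lemma ratpoly_add: "ratpoly p \<Longrightarrow> ratpoly q \<Longrightarrow> ratpoly (p + q)"
  unfolding ratpoly_def by (auto intro!: Rats_add)

lemma ratpoly_smult: "c \<in> \<rat> \<Longrightarrow> ratpoly q \<Longrightarrow> ratpoly (smult c q)"
  unfolding ratpoly_def by (auto intro!: Rats_mult)

lemma ratpoly_prod: "(\<And>x. x \<in> A \<Longrightarrow> ratpoly (f x)) \<Longrightarrow> ratpoly (\<Prod>x\<in>A. f x)"
proof (induction A rule: infinite_finite_induct)
  case (infinite A) then show ?case by (simp add: ratpoly_def coeff_1)
next
  case empty then show ?case by (simp add: ratpoly_def coeff_1)
next
  case (insert x F) then show ?case by (simp add: ratpoly_mult)
qed

lemma ratpoly_sum: "(\<And>x. x \<in> A \<Longrightarrow> ratpoly (f x)) \<Longrightarrow> ratpoly (\<Sum>x\<in>A. f x)"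
proof (induction A rule: infinite_finite_induct)
  case (infinite A) then show ?case by (simp add: ratpoly_def)
next
  case empty then show ?case by (simp add: ratpoly_def)
next
  case (insert x F) then show ?case by (simp add: ratpoly_add)
qed

lemma transc_not_rat:
  assumes "transcendental_real \<alpha>" shows "\<alpha> \<notin> \<rat>"
proof
  assume "\<alpha> \<in> \<rat>"
  have "[:-\<alpha>, 1:] \<noteq> 0" by simp
  moreover have "\<forall>i. coeff [:-\<alpha>, 1:] i \<in> \<rat>"
    using \<open>\<alpha> \<in> \<rat>\<close> by (auto simp: coeff_pCons split: nat.split)
  moreover have "poly [:-\<alpha>, 1:] \<alpha> = 0" by simp
  ultimately show False using assms unfolding transcendental_real_def by blast
qed

lemma indep_recip:
  fixes \<rho> :: "'a \<Rightarrow> rat" and c :: "'a \<Rightarrow> real"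
  assumes transc: "transcendental_real \<alpha>" and fin: "finite S" and inj: "inj_on \<rho> S"
    and crat: "\<And>k. k \<in> S \<Longrightarrow> c k \<in> \<rat>"
    and sum0: "(\<Sum>k\<in>S. c k / (\<alpha> + of_rat (\<rho> k))) = 0" and k0: "k0 \<in> S"
  shows "c k0 = 0"
proof (rule ccontr)
  assume ck0: "c k0 \<noteq> 0"
  have nz: "\<alpha> + of_rat (\<rho> k) \<noteq> 0" for k
  proof
    assume "\<alpha> + of_rat (\<rho> k) = 0"
    then have "\<alpha> = - of_rat (\<rho> k)" by linarith
    then have "\<alpha> \<in> \<rat>" by simp
    with transc_not_rat[OF transc] show False by blast
  qed
  define P :: "'a \<Rightarrow> real poly" where "P k = (\<Prod>j\<in>S-{k}. [:of_rat (\<rho> j), 1:])" for k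
  define p where "p = (\<Sum>k\<in>S. smult (c k) (P k))"
  have polyp: "poly p x = (\<Sum>k\<in>S. c k * (\<Prod>j\<in>S-{k}. x + of_rat (\<rho> j)))" for x
    by (simp add: p_def P_def poly_sum poly_prod algebra_simps)
  have rp: "ratpoly p"
    unfolding p_def P_def
    by (intro ratpoly_sum ratpoly_smult ratpoly_prod crat)
       (auto simp: ratpoly_def coeff_pCons split: nat.split)
  have "poly p \<alpha> = (\<Sum>k\<in>S. (c k / (\<alpha> + of_rat (\<rho> k))) * (\<Prod>j\<in>S. \<alpha> + of_rat (\<rho> j)))"
    unfolding polyp
  proof (rule sum.cong)
    fix k assume "k \<in> S"
    then have "(\<Prod>j\<in>S. \<alpha> + of_rat (\<rho> j)) = (\<alpha> + of_rat (\<rho> k)) * (\<Prod>j\<in>S-{k}. \<alpha> + of_rat (\<rho> j))"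
      using fin by (simp add: prod.remove)
    then show "c k * (\<Prod>j\<in>S-{k}. \<alpha> + of_rat (\<rho> j)) = (c k / (\<alpha> + of_rat (\<rho> k))) * (\<Prod>j\<in>S. \<alpha> + of_rat (\<rho> j))"
      using nz[of k] by (simp add: field_simps)
  qed simp
  also have "\<dots> = (\<Sum>k\<in>S. c k / (\<alpha> + of_rat (\<rho> k))) * (\<Prod>j\<in>S. \<alpha> + of_rat (\<rho> j))" by (rule sum_distrib_right[symmetric])
  also have "\<dots> = 0" using sum0 by simp
  finally have pa: "poly p \<alpha> = 0" .
  have "poly p (- of_rat (\<rho> k0)) = c k0 * (\<Prod>j\<in>S-{k0}. - of_rat (\<rho> k0) + of_rat (\<rho> j))
        + (\<Sum>k\<in>S-{k0}. c k * (\<Prod>j\<in>S-{k}. - of_rat (\<rho> k0) + of_rat (\<rho> j)))"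
    unfolding polyp using fin k0 by (simp add: sum.remove)
  also have "(\<Sum>k\<in>S-{k0}. c k * (\<Prod>j\<in>S-{k}. - of_rat (\<rho> k0) + of_rat (\<rho> j))) = 0"
  proof (rule sum.neutral, intro ballI)
    fix k assume "k \<in> S - {k0}"
    then have "(\<Prod>j\<in>S-{k}. - of_rat (\<rho> k0) + (of_rat (\<rho> j)::real)) = 0"
      using fin k0 by (intro prod_zero) auto
    then show "c k * (\<Prod>j\<in>S-{k}. - of_rat (\<rho> k0) + of_rat (\<rho> j)) = 0" by simp
  qed
  also have "(\<Prod>j\<in>S-{k0}. - of_rat (\<rho> k0) + (of_rat (\<rho> j)::real)) \<noteq> 0"
  proof -
    have "- of_rat (\<rho> k0) + (of_rat (\<rho> j)::real) \<noteq> 0" if "j \<in> S-{k0}" for j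
    proof
      assume "- of_rat (\<rho> k0) + (of_rat (\<rho> j)::real) = 0"
      then have "\<rho> j = \<rho> k0" by simp
      with inj that k0 show False by (auto simp: inj_on_def)
    qed
    then show ?thesis using fin by simp
  qed
  then have "c k0 * (\<Prod>j\<in>S-{k0}. - of_rat (\<rho> k0) + (of_rat (\<rho> j)::real)) + 0 \<noteq> 0"
    using ck0 by simp
  finally have "p \<noteq> 0" by auto
  with rp pa transc show False unfolding transcendental_real_def ratpoly_def by blast
qed


lemma per_int:
  fixes g :: "real \<Rightarrow> real"
  assumes periodic: "\<And>x. g (x + T) = g x"
  shows "g (x + of_int h * T) = g x"
proof -
  have nat: "g (x + of_nat m * T) = g x" for x m
  proof (induction m arbitrary: x)
    case (Suc m)
    have "g (x + of_nat (Suc m) * T) = g ((x + of_nat m * T) + T)" by (simp add: algebra_simps)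
    also have "\<dots> = g x" using periodic Suc by simp
    finally show ?case .
  qed simp
  show ?thesis
  proof (cases "h \<ge> 0")
    case True
    then show ?thesis using nat[of x "nat h"] by simp
  next
    case False
    have "g (x + of_int h * T + of_nat (nat (-h)) * T) = g (x + of_int h * T)" by (rule nat)
    moreover have "of_nat (nat (-h)) = (- of_int h :: real)" using False by simp
    then have "x + of_int h * T + of_nat (nat (-h)) * T = x" by (simp add: algebra_simps)
    ultimately show ?thesis by simp
  qed
qed

lemma kron_approx:
  fixes r :: "'n::finite \<Rightarrow> rat" and s :: "'n \<Rightarrow> real"
  assumes transc: "transcendental_real \<alpha>" and distinct: "inj r" and T0: "T > 0" and d0: "\<delta> > 0"
  shows "\<exists>w. \<forall>i. \<exists>h::int. \<bar>w / (\<alpha> + of_rat (r i)) - (s i + of_int h * T)\<bar> < \<delta>"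
proof -
  define n where "n = CARD('n)"
  obtain e where e: "bij_betw e {..<n} (UNIV :: 'n set)"
    using ex_bij_betw_nat_finite[of "UNIV :: 'n set"] by (auto simp: n_def atLeast0LessThan)
  have ne: "\<alpha> + of_rat (r i) \<noteq> 0" for i
  proof
    assume "\<alpha> + of_rat (r i) = 0"
    then have "\<alpha> = - of_rat (r i)" by linarith
    then have "\<alpha> \<in> \<rat>" by simp
    with transc_not_rat[OF transc] show False by blast
  qed
  define \<theta> where "\<theta> k = 1 / (T * (\<alpha> + of_rat (r (e k))))" for k
  have einj: "inj_on e {..<n}" using e by (simp add: bij_betw_def)
  have inj\<theta>: "inj_on \<theta> {..<n}"
  proof (rule inj_onI)
    fix k k' assume kk: "k \<in> {..<n}" "k' \<in> {..<n}" "\<theta> k = \<theta> k'"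
    then have "T * (\<alpha> + of_rat (r (e k))) = T * (\<alpha> + of_rat (r (e k')))"
      by (simp add: \<theta>_def)
    then have "r (e k) = r (e k')" using T0 by simp
    then have "e k = e k'" using distinct by (simp add: inj_eq)
    then show "k = k'" using einj kk by (auto simp: inj_on_def)
  qed
  interpret Modules.module "(\<lambda>r. (*) (real_of_int r))"
    by (simp add: Modules.module.intro distrib_left mult.commute)
  have indp: "independent (\<theta> ` {..<n})"
    unfolding independent_explicit_module
  proof (intro allI impI)
    fix t u v
    assume fin: "finite t" and sub: "t \<subseteq> \<theta> ` {..<n}"
      and sum0: "(\<Sum>v\<in>t. real_of_int (u v) * v) = 0" and v: "v \<in> t"
    define I where "I = {k\<in>{..<n}. \<theta> k \<in> t}"
    have tI: "t = \<theta> ` I" using sub by (auto simp: I_def)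
    have injI: "inj_on \<theta> I" using inj\<theta> by (rule inj_on_subset) (auto simp: I_def)
    have "(\<Sum>k\<in>I. real_of_int (u (\<theta> k)) * \<theta> k) = 0"
      using sum0 unfolding tI by (simp add: sum.reindex[OF injI])
    moreover have "(\<Sum>k\<in>I. real_of_int (u (\<theta> k)) * \<theta> k) = (\<Sum>k\<in>I. real_of_int (u (\<theta> k)) / (\<alpha> + of_rat ((r \<circ> e) k))) / T"
      unfolding sum_divide_distrib
    proof (rule sum.cong)
      fix k
      have "c * \<theta> k = c / (\<alpha> + of_rat ((r \<circ> e) k)) / T" for c
        by (simp add: \<theta>_def)
      then show "real_of_int (u (\<theta> k)) * \<theta> k = real_of_int (u (\<theta> k)) / (\<alpha> + of_rat ((r \<circ> e) k)) / T" .
    qed simp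
    ultimately have s0: "(\<Sum>k\<in>I. real_of_int (u (\<theta> k)) / (\<alpha> + of_rat ((r \<circ> e) k))) = 0"
      using T0 by (metis divide_eq_0_iff less_irrefl)
    obtain k where k: "k \<in> I" "v = \<theta> k" using v tI by auto
    have injrI: "inj_on (r \<circ> e) I"
    proof (rule comp_inj_on)
      show "inj_on e I" using einj by (rule inj_on_subset) (auto simp: I_def)
      show "inj_on r (e ` I)" using distinct by (rule inj_on_subset) simp
    qed
    have finI: "finite I" by (simp add: I_def)
    have "real_of_int (u (\<theta> k)) = 0"
      by (rule indep_recip[where c="\<lambda>k. real_of_int (u (\<theta> k))", OF transc finI injrI _ s0 k(1)]) simp
    then show "u v = 0" using k by simp
  qed
  obtain t h where th: "\<And>k. k < n \<Longrightarrow> \<bar>t * \<theta> k - of_int (h k) - s (e k) / T\<bar> < \<delta> / T"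
    using Kronecker_thm_1[OF indp inj\<theta>, of "\<delta> / T" "\<lambda>k. s (e k) / T"] d0 T0 by (metis divide_pos_pos)
  show ?thesis
  proof (rule exI[of _ t], intro allI)
    fix i
    obtain k where k: "k < n" "e k = i" using e by (metis UNIV_I bij_betw_def imageE lessThan_iff)
    have A: "T * \<bar>t * \<theta> k - of_int (h k) - s (e k) / T\<bar> < \<delta>"
      using th[OF k(1)] T0 by (simp add: pos_less_divide_eq mult.commute)
    have B: "T * \<bar>t * \<theta> k - of_int (h k) - s (e k) / T\<bar> = \<bar>T * (t * \<theta> k - of_int (h k) - s (e k) / T)\<bar>"
      using T0 by (simp add: abs_mult)
    have C: "T * (t * \<theta> k - of_int (h k) - s (e k) / T) = t / (\<alpha> + of_rat (r i)) - (s i + of_int (h k) * T)"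
    proof -
      have hlp: "T * (t * \<theta> k) = t / (\<alpha> + of_rat (r i))" using T0 k(2) by (simp add: \<theta>_def)
      have "T * (t * \<theta> k - of_int (h k) - s (e k) / T) = T * (t * \<theta> k) - (s i + of_int (h k) * T)"
        using T0 k(2) by (simp add: field_simps)
      then show ?thesis by (simp only: hlp)
    qed
    have "\<bar>t / (\<alpha> + of_rat (r i)) - (s i + of_int (h k) * T)\<bar> < \<delta>"
      using A unfolding B C .
    then show "\<exists>h::int. \<bar>t / (\<alpha> + of_rat (r i)) - (s i + of_int h * T)\<bar> < \<delta>" by blast
  qed
qed



lemma value_approx:
  fixes g :: "real \<Rightarrow> real"
  assumes cont: "continuous_on {x1..x2} g" and x12: "x1 < x2"
    and y0: "Inf (g ` {x1..x2}) \<le> y0" "y0 \<le> Sup (g ` {x1..x2})" and eta: "\<eta> > 0"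
  shows "\<exists>s. isCont g s \<and> \<bar>g s - y0\<bar> < \<eta>"
proof -
  define G where "G = g ` {x1..x2}"
  have cG: "compact G" unfolding G_def using cont by (rule compact_continuous_image) simp
  have neG: "G \<noteq> {}" using x12 by (simp add: G_def)
  have "Inf G \<in> G" using cG neG
    by (intro closed_contains_Inf) (auto simp: compact_imp_closed bounded_imp_bdd_below compact_imp_bounded)
  moreover have "Sup G \<in> G" using cG neG
    by (intro closed_contains_Sup) (auto simp: compact_imp_closed bounded_imp_bdd_above compact_imp_bounded)
  moreover have "connected G" unfolding G_def using cont by (rule connected_continuous_image) simp
  ultimately have "{Inf G..Sup G} \<subseteq> G" by (intro connected_contains_Icc)
  then have "y0 \<in> G" using y0 by (auto simp: G_def)
  then obtain t where t: "t \<in> {x1..x2}" "g t = y0" by (auto simp: G_def)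
  from cont t(1) obtain d where d: "d > 0" "\<And>x'. x' \<in> {x1..x2} \<Longrightarrow> dist x' t < d \<Longrightarrow> dist (g x') (g t) < \<eta>"
    unfolding continuous_on_iff using eta by metis
  have "t \<in> closure {x1<..<x2}" using t(1) x12 by simp
  then obtain s where s: "s \<in> {x1<..<x2}" "dist s t < d"
    using d(1) unfolding closure_approachable by blast
  have "isCont g s"
    using continuous_on_interior[OF cont] s(1) by simp
  moreover have "\<bar>g s - y0\<bar> < \<eta>" using d(2)[OF _ s(2)] s(1) t(2) by (simp add: dist_real_def)
  ultimately show ?thesis by blast
qed

theorem proposition20:
  fixes g :: "real \<Rightarrow> real" and T x1 x2 \<alpha> :: real and r :: "'n::finite \<Rightarrow> rat"
  assumes periodic: "\<And>x. g (x + T) = g x"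
    and interval: "0 < x2 - x1" "x2 - x1 < T"
    and cont: "continuous_on {x1..x2} g"
    and transc: "transcendental_real \<alpha>"
    and distinct: "inj r"
  defines "M1 \<equiv> Inf (g ` {x1..x2})" and "M2 \<equiv> Sup (g ` {x1..x2})"
  shows "({y :: real ^ 'n. \<forall>i. M1 \<le> y $ i \<and> y $ i \<le> M2}
           \<subseteq> closure (range (\<lambda>w. \<chi> i. g (w / (\<alpha> + of_rat (r i))))))
         \<and> (M1 < M2 \<longrightarrow>
           closure {(\<chi> i. u * g (w / (\<alpha> + of_rat (r i))) + v) :: real ^ 'n | u v w. True}
             = UNIV)"
proof -
  have T0: "T > 0" using interval by linarith
  have x12: "x1 < x2" using interval by linarith
  define F :: "real \<Rightarrow> real ^ 'n" where "F w = (\<chi> i. g (w / (\<alpha> + of_rat (r i))))" for w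
  have part1: "{y :: real ^ 'n. \<forall>i. M1 \<le> y $ i \<and> y $ i \<le> M2} \<subseteq> closure (range F)"
  proof
    fix y :: "real ^ 'n"
    assume "y \<in> {y. \<forall>i. M1 \<le> y $ i \<and> y $ i \<le> M2}"
    then have y: "M1 \<le> y $ i" "y $ i \<le> M2" for i by auto
    show "y \<in> closure (range F)"
      unfolding closure_approachable
    proof (intro allI impI)
      fix \<epsilon> :: real assume \<epsilon>: "\<epsilon> > 0"
      define \<eta> where "\<eta> = \<epsilon> / (2 * real CARD('n))"
      have \<eta>: "\<eta> > 0" using \<epsilon> by (simp add: \<eta>_def)
      have "\<forall>i. \<exists>s. isCont g s \<and> \<bar>g s - y $ i\<bar> < \<eta>"
        using value_approx[OF cont x12 _ _ \<eta>] y unfolding M1_def M2_def by blast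
      then obtain s where s: "\<And>i. isCont g (s i)" "\<And>i. \<bar>g (s i) - y $ i\<bar> < \<eta>" by metis
      have "\<forall>i. \<exists>d>0. \<forall>z. \<bar>z - s i\<bar> < d \<longrightarrow> \<bar>g z - g (s i)\<bar> < \<eta>"
      proof
        fix i
        from s(1)[of i] \<eta> obtain d where d: "d > 0" "\<And>z. z \<noteq> s i \<and> norm (z - s i) < d \<longrightarrow> norm (g z - g (s i)) < \<eta>"
          unfolding isCont_def LIM_eq by metis
        have "\<bar>g z - g (s i)\<bar> < \<eta>" if "\<bar>z - s i\<bar> < d" for z
          using d(2)[of z] that \<eta> by (cases "z = s i") auto
        then show "\<exists>d>0. \<forall>z. \<bar>z - s i\<bar> < d \<longrightarrow> \<bar>g z - g (s i)\<bar> < \<eta>" using d(1) by blast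
      qed
      then obtain d where d: "\<And>i. d i > 0" "\<And>i z. \<bar>z - s i\<bar> < d i \<Longrightarrow> \<bar>g z - g (s i)\<bar> < \<eta>"
        by metis
      define \<delta> where "\<delta> = Min (range d)"
      have \<delta>: "\<delta> > 0" using d(1) by (simp add: \<delta>_def)
      have \<delta>d: "\<delta> \<le> d i" for i by (simp add: \<delta>_def)
      obtain w where w: "\<And>i. \<exists>h::int. \<bar>w / (\<alpha> + of_rat (r i)) - (s i + of_int h * T)\<bar> < \<delta>"
        using kron_approx[OF transc distinct T0 \<delta>, of s] by blast
      have comp: "\<bar>F w $ i - y $ i\<bar> < 2 * \<eta>" for i
      proof -
        obtain h :: int where h: "\<bar>w / (\<alpha> + of_rat (r i)) - (s i + of_int h * T)\<bar> < \<delta>" using w by blast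
        define z where "z = w / (\<alpha> + of_rat (r i)) - of_int h * T"
        have "F w $ i = g (z + of_int h * T)" by (simp add: F_def z_def)
        also have "\<dots> = g z" by (rule per_int[where g=g and T=T, OF periodic])
        finally have Fz: "F w $ i = g z" .
        have "\<bar>z - s i\<bar> < d i" using h \<delta>d[of i] by (simp add: z_def algebra_simps)
        then have "\<bar>g z - g (s i)\<bar> < \<eta>" by (rule d(2))
        then show ?thesis using Fz s(2)[of i] by linarith
      qed
      have "dist (F w) y = norm (F w - y)" by (simp add: dist_norm)
      also have "\<dots> \<le> (\<Sum>i\<in>UNIV. \<bar>(F w - y) $ i\<bar>)" by (rule norm_le_l1_cart)
      also have "\<dots> < (\<Sum>i\<in>(UNIV::'n set). 2 * \<eta>)"
        by (rule sum_strict_mono) (auto simp: comp)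
      also have "\<dots> = \<epsilon>" by (simp add: \<eta>_def)
      finally show "\<exists>x\<in>range F. dist x y < \<epsilon>" by blast
    qed
  qed
  have part2: "closure {(\<chi> i. u * g (w / (\<alpha> + of_rat (r i))) + v) :: real ^ 'n | u v w. True} = UNIV"
    if M12: "M1 < M2"
  proof -
    let ?S = "{(\<chi> i. u * g (w / (\<alpha> + of_rat (r i))) + v) :: real ^ 'n | u v w. True}"
    have "z \<in> closure ?S" for z :: "real ^ 'n"
    proof -
      define c where "c = (M1 + M2) / 2"
      define dd where "dd = (M2 - M1) / 2"
      have dd: "dd > 0" using M12 by (simp add: dd_def)
      define u where "u = (\<Sum>i\<in>UNIV. \<bar>z $ i\<bar>) / dd + 1"
      have "(\<Sum>i\<in>UNIV. \<bar>z $ i\<bar>) / dd \<ge> 0" using dd by (simp add: sum_nonneg)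
      then have u: "u > 0" by (simp add: u_def)
      have zi: "\<bar>z $ i\<bar> \<le> dd * u" for i
      proof -
        have "\<bar>z $ i\<bar> \<le> (\<Sum>i\<in>UNIV. \<bar>z $ i\<bar>)" by (rule member_le_sum) auto
        also have "\<dots> = dd * ((\<Sum>i\<in>UNIV. \<bar>z $ i\<bar>) / dd)" using dd by simp
        also have "\<dots> \<le> dd * u" using dd by (intro mult_left_mono) (auto simp: u_def)
        finally show ?thesis .
      qed
      define y :: "real ^ 'n" where "y = (\<chi> i. c + z $ i / u)"
      have zu: "\<bar>z $ i / u\<bar> \<le> dd" for i using zi[of i] u by (simp add: abs_div pos_divide_le_eq)
      have "M1 \<le> y $ i \<and> y $ i \<le> M2" for i
      proof -
        define q where "q = z $ i / u"
        have "y $ i = c + q" by (simp add: y_def q_def)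
        moreover have "- dd \<le> q" "q \<le> dd" using zu[of i] unfolding q_def by linarith+
        ultimately have "M1 \<le> y $ i" "y $ i \<le> M2" unfolding c_def dd_def by (simp_all add: field_simps)
        then show ?thesis by simp
      qed
      then have yc: "y \<in> closure (range F)" using part1 by blast
      define f where "f x = u *\<^sub>R x + (\<chi> i. - u * c)" for x :: "real ^ 'n"
      have A: "f ` closure (range F) \<subseteq> closure ?S"
      proof (rule image_closure_subset)
        show "continuous_on (closure (range F)) f" unfolding f_def by (intro continuous_intros)
        show "closed (closure ?S)" by simp
        show "f ` range F \<subseteq> closure ?S"
        proof
          fix x assume "x \<in> f ` range F"
          then obtain w where "x = f (F w)" by auto
          then have "x = (\<chi> i. u * g (w / (\<alpha> + of_rat (r i))) + (- u * c))"
            by (simp add: f_def F_def vec_eq_iff)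
          then have "x \<in> ?S" by (intro CollectI exI[of _ u] exI[of _ "- u * c"] exI[of _ w]) simp
          then show "x \<in> closure ?S" by (rule subsetD[OF closure_subset])
        qed
      qed
      have B: "f y = z" using u by (simp add: f_def y_def vec_eq_iff field_simps)
      have "f y \<in> closure ?S" by (rule subsetD[OF A imageI[OF yc]])
      then show ?thesis unfolding B .
    qed
    then have allz: "\<And>z. z \<in> closure ?S" .
    show ?thesis
    proof (rule set_eqI)
      fix x show "x \<in> closure ?S \<longleftrightarrow> x \<in> UNIV" using allz[of x] by (intro iffI UNIV_I)
    qed
  qed
  have part1': "{y :: real ^ 'n. \<forall>i. M1 \<le> y $ i \<and> y $ i \<le> M2}
           \<subseteq> closure (range (\<lambda>w. \<chi> i. g (w / (\<alpha> + of_rat (r i)))))"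
    using part1 unfolding F_def[abs_def] .
  show ?thesis by (intro conjI impI part1' part2)
qed

end
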